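(* Let $P\in\mathbb{Q}_{\ge0}^{N\times N}$ be the transition matrix of a reversible and ergodic Markov chain on $V$ with stationary distribution $\pi$ and mixing rate $t^*$. For the rotor-router model on a multidigraph for $P$, with any initial configuration, $$\left|\chi^{(T)}_w-\mu^{(T)}_w\right|\le\frac{3\pi_w}{\pi_{\min}}\,t^*\,\bar\Delta$$ for all $w\in V$ and $T\ge0$.
   Context: Let $V=\{1,\dots,N\}$ and let $P\in\mathbb{Q}_{\ge 0}^{N\times N}$ be an ergodic (irreducible, aperiodic) stochastic matrix with stationary distribution $\pi$; $\pi_{\min}=\min_v\pi_v$; reversible means $\pi_uP_{u,v}=\pi_vP_{v,u}$ for all $u,v$. For $v\in V$ let $\mathcal N(v)=\{u: P_{v,u}>0\}$. Total variation distance $d_{TV}(\xi,\zeta)=\frac12\|\xi-\zeta\|_1$; mixing time $\tau(\varepsilon)=\max_{v}\min\{t\ge0: d_{TV}(P^t_{v,\cdot},\pi)\le\varepsilon\}$; mixing rate $t^*=\tau(1/4)$. For each $v$ let $\bar\delta(v)$ be a positive integer with $\bar\delta(v)P_{v,u}\in\mathbb{Z}$ for all $u$, and $\bar\Delta=\max_v\bar\delta(v)$. The rotor router: $\sigma_v(0),\dots,\sigma_v(\bar\delta(v)-1)\in\mathcal N(v)$ is any sequence in which each $u\in\mathcal N(v)$ occurs exactly $\bar\delta(v)P_{v,u}$ times, extended by $\sigma_v(i)=\sigma_v(i\bmod\bar\delta(v))$. Write $I_{v,u}[z,z')=|\{j\in\{z,\dots,z'-1\}:\sigma_v(j)=u\}|$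 (zero if $z'\le z$). Given $\chi^{(0)}\in\mathbb{Z}_{\ge0}^N$, set $Z^{(t)}_{v,u}=I_{v,u}\big[\sum_{s=0}^{t-1}\chi^{(s)}_v,\sum_{s=0}^{t}\chi^{(s)}_v\big)$, $\chi^{(t+1)}_u=\sum_vZ^{(t)}_{v,u}$, $\mu^{(0)}=\chi^{(0)}$, $\mu^{(t)}=\mu^{(0)}P^t$. *)

theory Defs
  imports Complex_Main
begin

text \<open>State space V = {0..<N} (0-based). Matrices are functions nat => nat => real,
  vectors are functions nat => real; only indices < N are relevant.\<close>

fun mpow :: "nat \<Rightarrow> (nat \<Rightarrow> nat \<Rightarrow> real) \<Rightarrow> nat \<Rightarrow> nat \<Rightarrow> nat \<Rightarrow> real" where
  "mpow N P 0 = (\<lambda>u v. if u = v then 1 else 0)"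
| "mpow N P (Suc t) = (\<lambda>u v. \<Sum>w<N. mpow N P t u w * P w v)"

definition stochastic :: "nat \<Rightarrow> (nat \<Rightarrow> nat \<Rightarrow> real) \<Rightarrow> bool" where
  "stochastic N P \<longleftrightarrow> (\<forall>u<N. \<forall>v<N. P u v \<ge> 0) \<and> (\<forall>u<N. (\<Sum>v<N. P u v) = 1)"

definition irreducible_chain :: "nat \<Rightarrow> (nat \<Rightarrow> nat \<Rightarrow> real) \<Rightarrow> bool" where
  "irreducible_chain N P \<longleftrightarrow> (\<forall>u<N. \<forall>v<N. \<exists>t. mpow N P t u v > 0)"

definition period :: "nat \<Rightarrow> (nat \<Rightarrow> nat \<Rightarrow> real) \<Rightarrow> nat \<Rightarrow> nat" where
  "period N P v = Gcd {t. t \<ge> 1 \<and> mpow N P t v v > 0}"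

definition aperiodic_chain :: "nat \<Rightarrow> (nat \<Rightarrow> nat \<Rightarrow> real) \<Rightarrow> bool" where
  "aperiodic_chain N P \<longleftrightarrow> (\<forall>v<N. period N P v = 1)"

definition ergodic :: "nat \<Rightarrow> (nat \<Rightarrow> nat \<Rightarrow> real) \<Rightarrow> bool" where
  "ergodic N P \<longleftrightarrow> irreducible_chain N P \<and> aperiodic_chain N P"

definition stationary :: "nat \<Rightarrow> (nat \<Rightarrow> nat \<Rightarrow> real) \<Rightarrow> (nat \<Rightarrow> real) \<Rightarrow> bool" where
  "stationary N P \<pi> \<longleftrightarrow> (\<forall>v<N. \<pi> v \<ge> 0) \<and> (\<Sum>v<N. \<pi> v) = 1
      \<and> (\<forall>v<N. (\<Sum>u<N. \<pi> u * P u v) = \<pi> v)"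

definition reversible :: "nat \<Rightarrow> (nat \<Rightarrow> nat \<Rightarrow> real) \<Rightarrow> (nat \<Rightarrow> real) \<Rightarrow> bool" where
  "reversible N P \<pi> \<longleftrightarrow> (\<forall>u<N. \<forall>v<N. \<pi> u * P u v = \<pi> v * P v u)"

definition pi_min :: "nat \<Rightarrow> (nat \<Rightarrow> real) \<Rightarrow> real" where
  "pi_min N \<pi> = Min (\<pi> ` {..<N})"

definition dtv :: "nat \<Rightarrow> (nat \<Rightarrow> real) \<Rightarrow> (nat \<Rightarrow> real) \<Rightarrow> real" where
  "dtv N \<xi> \<zeta> = (1/2) * (\<Sum>v<N. \<bar>\<xi> v - \<zeta> v\<bar>)"

definition mixing_time :: "nat \<Rightarrow> (nat \<Rightarrow> nat \<Rightarrow> real) \<Rightarrow> (nat \<Rightarrow> real) \<Rightarrow> real \<Rightarrow> nat" where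
  "mixing_time N P \<pi> \<epsilon> = Max ((\<lambda>v. LEAST t. dtv N (mpow N P t v) \<pi> \<le> \<epsilon>) ` {..<N})"

definition mixing_rate :: "nat \<Rightarrow> (nat \<Rightarrow> nat \<Rightarrow> real) \<Rightarrow> (nat \<Rightarrow> real) \<Rightarrow> nat" where
  "mixing_rate N P \<pi> = mixing_time N P \<pi> (1/4)"

text \<open>Rotor router. \<sigma> v i for i < \<delta> v is the rotor sequence of v;
  it is extended periodically.\<close>

definition sigma_ext :: "(nat \<Rightarrow> nat \<Rightarrow> nat) \<Rightarrow> (nat \<Rightarrow> nat) \<Rightarrow> nat \<Rightarrow> nat \<Rightarrow> nat" where
  "sigma_ext \<sigma> \<delta> v i = \<sigma> v (i mod \<delta> v)"

definition rotor_seq_ok :: "nat \<Rightarrow> (nat \<Rightarrow> nat \<Rightarrow> real) \<Rightarrow> (nat \<Rightarrow> nat) \<Rightarrow> (nat \<Rightarrow> nat \<Rightarrow> nat) \<Rightarrow> bool" where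
  "rotor_seq_ok N P \<delta> \<sigma> \<longleftrightarrow>
     (\<forall>v<N. \<delta> v > 0 \<and> (\<forall>u<N. real (\<delta> v) * P v u \<in> \<int>)
        \<and> (\<forall>i<\<delta> v. \<sigma> v i < N \<and> P v (\<sigma> v i) > 0)
        \<and> (\<forall>u<N. P v u > 0 \<longrightarrow> real (card {i. i < \<delta> v \<and> \<sigma> v i = u}) = real (\<delta> v) * P v u))"

definition Icount :: "(nat \<Rightarrow> nat \<Rightarrow> nat) \<Rightarrow> (nat \<Rightarrow> nat) \<Rightarrow> nat \<Rightarrow> nat \<Rightarrow> nat \<Rightarrow> nat \<Rightarrow> nat" where
  "Icount \<sigma> \<delta> v u z z' = card {j. z \<le> j \<and> j < z' \<and> sigma_ext \<sigma> \<delta> v j = u}"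

text \<open>rr_state t = (chi^(t), S^(t)) where S^(t)_v = sum_{s<t} chi^(s)_v.\<close>
fun rr_state :: "nat \<Rightarrow> (nat \<Rightarrow> nat \<Rightarrow> nat) \<Rightarrow> (nat \<Rightarrow> nat) \<Rightarrow> (nat \<Rightarrow> nat) \<Rightarrow> nat
                  \<Rightarrow> (nat \<Rightarrow> nat) \<times> (nat \<Rightarrow> nat)" where
  "rr_state N \<sigma> \<delta> \<chi>0 0 = (\<chi>0, \<lambda>v. 0)"
| "rr_state N \<sigma> \<delta> \<chi>0 (Suc t) =
     (let (c, S) = rr_state N \<sigma> \<delta> \<chi>0 t in
       (\<lambda>u. \<Sum>v<N. Icount \<sigma> \<delta> v u (S v) (S v + c v), \<lambda>v. S v + c v))"

definition rr_chi :: "nat \<Rightarrow> (nat \<Rightarrow> nat \<Rightarrow> nat) \<Rightarrow> (nat \<Rightarrow> nat) \<Rightarrow> (nat \<Rightarrow> nat) \<Rightarrow> nat \<Rightarrow> nat \<Rightarrow> nat" where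
  "rr_chi N \<sigma> \<delta> \<chi>0 t = fst (rr_state N \<sigma> \<delta> \<chi>0 t)"

definition mu :: "nat \<Rightarrow> (nat \<Rightarrow> nat \<Rightarrow> real) \<Rightarrow> (nat \<Rightarrow> nat) \<Rightarrow> nat \<Rightarrow> nat \<Rightarrow> real" where
  "mu N P \<chi>0 t w = (\<Sum>v<N. real (\<chi>0 v) * mpow N P t v w)"

definition Delta_bar :: "nat \<Rightarrow> (nat \<Rightarrow> nat) \<Rightarrow> nat" where
  "Delta_bar N \<delta> = Max (\<delta> ` {..<N})"

end

theory Submission
  imports Defs
begin

lemma mpow_nonneg:
  assumes "stochastic N P" "v < N"
  shows "0 \<le> mpow N P t u v"
  using assms(2)
proof (induction t arbitrary: u v)
  case 0 then show ?case by simp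
next
  case (Suc t) then show ?case using assms(1) unfolding stochastic_def
    by (auto intro!: sum_nonneg mult_nonneg_nonneg)
qed

lemma mpow_rowsum:
  assumes "stochastic N P" "u < N"
  shows "(\<Sum>v<N. mpow N P t u v) = 1"
proof (induction t)
  case 0 then show ?case using assms(2) by simp
next
  case (Suc t)
  have "(\<Sum>v<N. mpow N P (Suc t) u v) = (\<Sum>w<N. mpow N P t u w * (\<Sum>v<N. P w v))"
    by (simp add: sum_distrib_left) (rule sum.swap)
  also have "\<dots> = (\<Sum>w<N. mpow N P t u w)"
    using assms(1) unfolding stochastic_def by simp
  finally show ?case using Suc by simp
qed

lemma mpow_add:
  "v < N \<Longrightarrow> mpow N P (a + b) u v = (\<Sum>w<N. mpow N P a u w * mpow N P b w v)"
proof (induction b arbitrary: v)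
  case 0 then show ?case by (simp add: if_distrib cong: if_cong)
next
  case (Suc b)
  have "mpow N P (a + Suc b) u v = (\<Sum>w<N. (\<Sum>x<N. mpow N P a u x * mpow N P b x w) * P w v)"
    using Suc by simp
  also have "\<dots> = (\<Sum>x<N. mpow N P a u x * (\<Sum>w<N. mpow N P b x w * P w v))"
    by (simp add: sum_distrib_left sum_distrib_right mult.assoc) (rule sum.swap)
  finally show ?case by simp
qed

lemma mpow_one: "w < N \<Longrightarrow> mpow N P 1 w v = P w v"
proof -
  assume "w < N"
  have "mpow N P 1 w v = (\<Sum>x<N. if w = x then P x v else 0)"
    by (simp only: One_nat_def mpow.simps) (intro sum.cong; simp)
  then show ?thesis using \<open>w < N\<close> by simp
qed

lemma mpow_Suc_left:
  "v < N \<Longrightarrow> u < N \<Longrightarrow> mpow N P (Suc t) u v = (\<Sum>w<N. P u w * mpow N P t w v)"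
proof -
  assume a: "v < N" "u < N"
  have "mpow N P (1 + t) u v = (\<Sum>w<N. mpow N P 1 u w * mpow N P t w v)"
    by (rule mpow_add[OF a(1)])
  also have "\<dots> = (\<Sum>w<N. P u w * mpow N P t w v)"
    using a by (simp only: mpow_one)
  finally show ?thesis by simp
qed

lemma stat_pow:
  assumes "stationary N P \<pi>" "v < N"
  shows "(\<Sum>u<N. \<pi> u * mpow N P t u v) = \<pi> v"
  using assms(2)
proof (induction t arbitrary: v)
  case 0 then show ?case by (simp add: if_distrib cong: if_cong)
next
  case (Suc t)
  have "(\<Sum>u<N. \<pi> u * mpow N P (Suc t) u v) = (\<Sum>w<N. (\<Sum>u<N. \<pi> u * mpow N P t u w) * P w v)"
    by (simp add: sum_distrib_left sum_distrib_right mult.assoc) (rule sum.swap)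
  also have "\<dots> = (\<Sum>w<N. \<pi> w * P w v)" using Suc by simp
  finally show ?case using assms(1) Suc unfolding stationary_def by simp
qed

lemma rev_pow:
  assumes "reversible N P \<pi>" "u < N" "v < N"
  shows "\<pi> u * mpow N P t u v = \<pi> v * mpow N P t v u"
  using assms(2,3)
proof (induction t arbitrary: u v)
  case 0 then show ?case by simp
next
  case (Suc t)
  have "\<pi> u * mpow N P (Suc t) u v = (\<Sum>w<N. (\<pi> u * mpow N P t u w) * P w v)"
    by (simp add: sum_distrib_left mult.assoc)
  also have "\<dots> = (\<Sum>w<N. mpow N P t w u * (\<pi> w * P w v))"
    using Suc by (intro sum.cong) (auto simp: mult_ac)
  also have "\<dots> = (\<Sum>w<N. mpow N P t w u * (\<pi> v * P v w))"
    using assms(1) Suc unfolding reversible_def by (intro sum.cong) auto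
  also have "\<dots> = \<pi> v * (\<Sum>w<N. P v w * mpow N P t w u)"
    by (simp add: sum_distrib_left mult_ac)
  also have "\<dots> = \<pi> v * mpow N P (Suc t) v u"
    by (subst mpow_Suc_left) (use Suc.prems in auto)
  finally show ?case .
qed

lemma Icount_sum:
  "Icount \<sigma> \<delta> v u z z' = (\<Sum>j\<in>{z..<z'}. if sigma_ext \<sigma> \<delta> v j = u then 1 else 0)"
proof -
  have "{j. z \<le> j \<and> j < z' \<and> sigma_ext \<sigma> \<delta> v j = u} = {j\<in>{z..<z'}. sigma_ext \<sigma> \<delta> v j = u}"
    by auto
  then show ?thesis unfolding Icount_def
    by (simp add: sum.inter_filter[symmetric])
qed

lemma Icount_split:
  "z \<le> z' \<Longrightarrow> z' \<le> z'' \<Longrightarrow> Icount \<sigma> \<delta> v u z z'' = Icount \<sigma> \<delta> v u z z' + Icount \<sigma> \<delta> v u z' z''"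
  unfolding Icount_sum by (simp add: sum.atLeastLessThan_concat)

lemma Icount_period:
  assumes "0 < \<delta> v"
  shows "Icount \<sigma> \<delta> v u z (z + \<delta> v) = card {i. i < \<delta> v \<and> \<sigma> v i = u}"
proof (induction z)
  case 0
  have "{j. 0 \<le> j \<and> j < \<delta> v \<and> \<sigma> v (j mod \<delta> v) = u} = {i. i < \<delta> v \<and> \<sigma> v i = u}"
    by auto
  then show ?case by (simp add: Icount_def sigma_ext_def)
next
  case (Suc z)
  define f where "f j = (if sigma_ext \<sigma> \<delta> v j = u then 1 else 0::nat)" for j
  have per: "f (z + \<delta> v) = f z" by (simp add: f_def sigma_ext_def)
  have a: "sum f {z..<Suc (z + \<delta> v)} = sum f {z..<z + \<delta> v} + f (z + \<delta> v)"
    by (rule sum.atLeastLessThan_Suc) simp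
  have b: "sum f {z..<Suc (z + \<delta> v)} = f z + sum f {Suc z..<Suc (z + \<delta> v)}"
    by (rule sum.atLeast_Suc_lessThan) (use assms in simp)
  have "sum f {Suc z..<Suc z + \<delta> v} = sum f {z..<z + \<delta> v}" using a b per by simp
  then show ?case using Suc unfolding Icount_sum f_def by simp
qed

lemma rotor_disc:
  assumes R: "rotor_seq_ok N P \<delta> \<sigma>" and S: "stochastic N P" and v: "v < N" and u: "u < N"
  shows "\<bar>real (Icount \<sigma> \<delta> v u z (z + k)) - real k * P v u\<bar> \<le> real (\<delta> v) * P v u"
proof -
  have dpos: "0 < \<delta> v" and sig: "\<forall>i<\<delta> v. \<sigma> v i < N \<and> P v (\<sigma> v i) > 0"
    and crd: "P v u > 0 \<longrightarrow> real (card {i. i < \<delta> v \<and> \<sigma> v i = u}) = real (\<delta> v) * P v u"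
    using R v u unfolding rotor_seq_ok_def by auto
  have Pnn: "P v u \<ge> 0" using S v u unfolding stochastic_def by auto
  show ?thesis
  proof (cases "P v u = 0")
    case True
    have "{j. z \<le> j \<and> j < z + k \<and> sigma_ext \<sigma> \<delta> v j = u} = {}"
    proof (rule ccontr)
      assume "{j. z \<le> j \<and> j < z + k \<and> sigma_ext \<sigma> \<delta> v j = u} \<noteq> {}"
      then obtain j where "sigma_ext \<sigma> \<delta> v j = u" by auto
      then have "\<sigma> v (j mod \<delta> v) = u" by (simp add: sigma_ext_def)
      moreover have "j mod \<delta> v < \<delta> v" using dpos by simp
      ultimately show False using sig True by force
    qed
    then show ?thesis using True by (simp add: Icount_def)
  next
    case False
    then have Ppos: "P v u > 0" using Pnn by simp
    define c where "c = card {i. i < \<delta> v \<and> \<sigma> v i = u}"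
    have c: "real c = real (\<delta> v) * P v u" using crd Ppos c_def by simp
    show ?thesis
    proof (induction k arbitrary: z rule: less_induct)
      case (less k)
      show ?case
      proof (cases "\<delta> v \<le> k")
        case True
        have sp: "Icount \<sigma> \<delta> v u z (z + k) = Icount \<sigma> \<delta> v u z (z + \<delta> v)
               + Icount \<sigma> \<delta> v u (z + \<delta> v) (z + \<delta> v + (k - \<delta> v))"
          using True Icount_split[of z "z + \<delta> v" "z + k"] by simp
        have IH: "\<bar>real (Icount \<sigma> \<delta> v u (z + \<delta> v) (z + \<delta> v + (k - \<delta> v))) - real (k - \<delta> v) * P v u\<bar>
            \<le> real (\<delta> v) * P v u"
          using less.IH[of "k - \<delta> v" "z + \<delta> v"] dpos True by simp
        have e1: "real (Icount \<sigma> \<delta> v u z (z + k)) = real c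
             + real (Icount \<sigma> \<delta> v u (z + \<delta> v) (z + \<delta> v + (k - \<delta> v)))"
          using sp Icount_period[of \<delta> v \<sigma> u z, OF dpos] unfolding c_def by simp
        have e2: "real k * P v u = real (\<delta> v) * P v u + real (k - \<delta> v) * P v u"
          using True by (simp add: of_nat_diff left_diff_distrib)
        have "real (Icount \<sigma> \<delta> v u z (z + k)) - real k * P v u
            = real (Icount \<sigma> \<delta> v u (z + \<delta> v) (z + \<delta> v + (k - \<delta> v))) - real (k - \<delta> v) * P v u"
          using e1 e2 c by linarith
        then show ?thesis using IH by simp
      next
        case False
        have le: "Icount \<sigma> \<delta> v u z (z + k) \<le> c"
          using Icount_split[of z "z + k" "z + \<delta> v" \<sigma> \<delta> v u] Icount_period[of \<delta> v \<sigma> u z, OF dpos] False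
          unfolding c_def by simp
        have "real k * P v u \<le> real (\<delta> v) * P v u"
          using False Ppos by (intro mult_right_mono) auto
        moreover have "real (Icount \<sigma> \<delta> v u z (z + k)) \<le> real (\<delta> v) * P v u"
          using le c by (metis of_nat_le_iff)
        moreover have "0 \<le> real k * P v u" using Ppos by simp
        ultimately show ?thesis unfolding abs_le_iff by simp
      qed
    qed
  qed
qed

lemma Icount_rowsum:
  assumes R: "rotor_seq_ok N P \<delta> \<sigma>" and v: "v < N"
  shows "(\<Sum>u<N. Icount \<sigma> \<delta> v u z z') = z' - z"
proof -
  have lt: "sigma_ext \<sigma> \<delta> v j < N" for j
  proof -
    have "0 < \<delta> v" "\<forall>i<\<delta> v. \<sigma> v i < N" using R v unfolding rotor_seq_ok_def by auto
    then show ?thesis by (simp add: sigma_ext_def)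
  qed
  have "(\<Sum>u<N. Icount \<sigma> \<delta> v u z z')
      = (\<Sum>j\<in>{z..<z'}. \<Sum>u<N. if sigma_ext \<sigma> \<delta> v j = u then 1 else 0)"
    unfolding Icount_sum by (rule sum.swap)
  also have "\<dots> = (\<Sum>j\<in>{z..<z'}. 1)"
    using lt by (intro sum.cong) auto
  finally show ?thesis by simp
qed

definition rrS where "rrS N \<sigma> \<delta> \<chi>0 t = snd (rr_state N \<sigma> \<delta> \<chi>0 t)"

lemma rr_chi_0: "rr_chi N \<sigma> \<delta> \<chi>0 0 = \<chi>0"
  by (simp add: rr_chi_def)

lemma rr_chi_Suc: "rr_chi N \<sigma> \<delta> \<chi>0 (Suc t) u =
   (\<Sum>v<N. Icount \<sigma> \<delta> v u (rrS N \<sigma> \<delta> \<chi>0 t v) (rrS N \<sigma> \<delta> \<chi>0 t v + rr_chi N \<sigma> \<delta> \<chi>0 t v))"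
  by (simp add: rr_chi_def rrS_def case_prod_unfold Let_def)

definition Eerr where
  "Eerr N P \<sigma> \<delta> \<chi>0 t v u = real (Icount \<sigma> \<delta> v u (rrS N \<sigma> \<delta> \<chi>0 t v) (rrS N \<sigma> \<delta> \<chi>0 t v + rr_chi N \<sigma> \<delta> \<chi>0 t v))
      - real (rr_chi N \<sigma> \<delta> \<chi>0 t v) * P v u"

definition Gerr where "Gerr N P \<sigma> \<delta> \<chi>0 t y = (\<Sum>v<N. Eerr N P \<sigma> \<delta> \<chi>0 t v y)"

lemma chi_expand:
  "w < N \<Longrightarrow> real (rr_chi N \<sigma> \<delta> \<chi>0 T w) = mu N P \<chi>0 T w
     + (\<Sum>t<T. \<Sum>y<N. Gerr N P \<sigma> \<delta> \<chi>0 t y * mpow N P (T - Suc t) y w)"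
proof (induction T arbitrary: w)
  case 0
  have "mu N P \<chi>0 0 w = (\<Sum>v<N. if v = w then real (\<chi>0 v) else 0)"
    unfolding mu_def by (intro sum.cong) auto
  then show ?case using 0 by (simp add: rr_chi_0)
next
  case (Suc T)
  let ?c = "rr_chi N \<sigma> \<delta> \<chi>0"
  let ?G = "Gerr N P \<sigma> \<delta> \<chi>0"
  have c1: "real (?c (Suc T) w) = (\<Sum>v<N. real (?c T v) * P v w) + ?G T w"
    by (simp add: rr_chi_Suc Gerr_def Eerr_def sum.distrib[symmetric])
  have c2: "(\<Sum>v<N. real (?c T v) * P v w) =
      (\<Sum>v<N. (mu N P \<chi>0 T v + (\<Sum>t<T. \<Sum>y<N. ?G t y * mpow N P (T - Suc t) y v)) * P v w)"
    using Suc.IH by (intro sum.cong) auto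
  also have "\<dots> = (\<Sum>v<N. mu N P \<chi>0 T v * P v w)
      + (\<Sum>t<T. \<Sum>y<N. ?G t y * (\<Sum>v<N. mpow N P (T - Suc t) y v * P v w))"
  proof -
    let ?M = "\<lambda>t y v. mpow N P (T - Suc t) y v"
    have "(\<Sum>v<N. (\<Sum>t<T. \<Sum>y<N. ?G t y * ?M t y v) * P v w)
        = (\<Sum>v<N. \<Sum>t<T. \<Sum>y<N. ?G t y * ?M t y v * P v w)"
      by (simp add: sum_distrib_right)
    also have "\<dots> = (\<Sum>t<T. \<Sum>v<N. \<Sum>y<N. ?G t y * ?M t y v * P v w)"
      by (rule sum.swap)
    also have "\<dots> = (\<Sum>t<T. \<Sum>y<N. \<Sum>v<N. ?G t y * ?M t y v * P v w)"
      by (rule sum.cong[OF refl]) (rule sum.swap)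
    also have "\<dots> = (\<Sum>t<T. \<Sum>y<N. ?G t y * (\<Sum>v<N. ?M t y v * P v w))"
      by (simp add: sum_distrib_left mult.assoc)
    finally have e: "(\<Sum>v<N. (\<Sum>t<T. \<Sum>y<N. ?G t y * ?M t y v) * P v w)
        = (\<Sum>t<T. \<Sum>y<N. ?G t y * (\<Sum>v<N. ?M t y v * P v w))" .
    show ?thesis by (simp only: distrib_right sum.distrib e)
  qed
  also have "(\<Sum>v<N. mu N P \<chi>0 T v * P v w) = mu N P \<chi>0 (Suc T) w"
  proof -
    have "(\<Sum>v<N. (\<Sum>x<N. real (\<chi>0 x) * mpow N P T x v) * P v w)
        = (\<Sum>v<N. \<Sum>x<N. real (\<chi>0 x) * mpow N P T x v * P v w)"
      by (simp add: sum_distrib_right)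
    also have "\<dots> = (\<Sum>x<N. \<Sum>v<N. real (\<chi>0 x) * mpow N P T x v * P v w)"
      by (rule sum.swap)
    also have "\<dots> = (\<Sum>x<N. real (\<chi>0 x) * mpow N P (Suc T) x w)"
      by (simp add: sum_distrib_left mult.assoc)
    finally show ?thesis unfolding mu_def .
  qed
  also have "(\<Sum>t<T. \<Sum>y<N. ?G t y * (\<Sum>v<N. mpow N P (T - Suc t) y v * P v w))
      = (\<Sum>t<T. \<Sum>y<N. ?G t y * mpow N P (Suc T - Suc t) y w)"
  proof (intro sum.cong refl)
    fix t y assume "t \<in> {..<T}"
    then have "Suc T - Suc t = Suc (T - Suc t)" by simp
    then show "?G t y * (\<Sum>v<N. mpow N P (T - Suc t) y v * P v w) = ?G t y * mpow N P (Suc T - Suc t) y w"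
      by simp
  qed
  finally have c3: "(\<Sum>v<N. real (?c T v) * P v w) = mu N P \<chi>0 (Suc T) w
      + (\<Sum>t<T. \<Sum>y<N. ?G t y * mpow N P (Suc T - Suc t) y w)" .
  have c4: "(\<Sum>y<N. ?G T y * mpow N P (Suc T - Suc T) y w) = ?G T w"
  proof -
    have "(\<Sum>y<N. ?G T y * mpow N P (Suc T - Suc T) y w) = (\<Sum>y<N. if y = w then ?G T y else 0)"
      by (intro sum.cong) auto
    then show ?thesis using Suc.prems by simp
  qed
  show ?case using c1 c3 c4 by simp
qed

lemma Gerr_sum0:
  assumes R: "rotor_seq_ok N P \<delta> \<sigma>" and S: "stochastic N P"
  shows "(\<Sum>y<N. Gerr N P \<sigma> \<delta> \<chi>0 t y) = 0"
proof -
  have "(\<Sum>y<N. Gerr N P \<sigma> \<delta> \<chi>0 t y) = (\<Sum>v<N. \<Sum>y<N. Eerr N P \<sigma> \<delta> \<chi>0 t v y)"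
    unfolding Gerr_def by (rule sum.swap)
  also have "\<dots> = (\<Sum>v<N. 0)"
  proof (intro sum.cong refl)
    fix v assume v: "v \<in> {..<N}"
    let ?S = "rrS N \<sigma> \<delta> \<chi>0 t v" and ?c = "rr_chi N \<sigma> \<delta> \<chi>0 t v"
    have "(\<Sum>y<N. Eerr N P \<sigma> \<delta> \<chi>0 t v y) = real (\<Sum>y<N. Icount \<sigma> \<delta> v y ?S (?S + ?c)) - real ?c * (\<Sum>y<N. P v y)"
      unfolding Eerr_def by (simp add: sum_subtractf sum_distrib_left)
    also have "\<dots> = 0" using Icount_rowsum[OF R, of v ?S "?S + ?c"] v S unfolding stochastic_def by simp
    finally show "(\<Sum>y<N. Eerr N P \<sigma> \<delta> \<chi>0 t v y) = 0" .
  qed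
  finally show ?thesis by simp
qed

lemma Gerr_bound:
  assumes R: "rotor_seq_ok N P \<delta> \<sigma>" and S: "stochastic N P" and Rv: "reversible N P \<pi>"
    and pm: "0 < pi_min N \<pi>" and pmle: "\<forall>v<N. pi_min N \<pi> \<le> \<pi> v" and y: "y < N"
  shows "\<bar>Gerr N P \<sigma> \<delta> \<chi>0 t y\<bar> \<le> real (Delta_bar N \<delta>) * \<pi> y / pi_min N \<pi>"
proof -
  let ?D = "real (Delta_bar N \<delta>)" and ?m = "pi_min N \<pi>"
  have "\<bar>Gerr N P \<sigma> \<delta> \<chi>0 t y\<bar> \<le> (\<Sum>v<N. \<bar>Eerr N P \<sigma> \<delta> \<chi>0 t v y\<bar>)"
    unfolding Gerr_def by (rule sum_abs)
  also have "\<dots> \<le> (\<Sum>v<N. ?D * (\<pi> y * P y v / ?m))"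
  proof (intro sum_mono)
    fix v assume v: "v \<in> {..<N}"
    have Pnn: "0 \<le> P v y" "0 \<le> P y v" using S v y unfolding stochastic_def by auto
    have "\<bar>Eerr N P \<sigma> \<delta> \<chi>0 t v y\<bar> \<le> real (\<delta> v) * P v y"
      unfolding Eerr_def using rotor_disc[OF R S, of v y] v y by simp
    also have "\<dots> \<le> ?D * P v y"
    proof (intro mult_right_mono Pnn)
      have "\<delta> v \<le> Delta_bar N \<delta>" unfolding Delta_bar_def using v by (intro Max_ge) auto
      then show "real (\<delta> v) \<le> ?D" by simp
    qed
    also have "\<dots> \<le> ?D * (\<pi> y * P y v / ?m)"
    proof (intro mult_left_mono)
      have "?m * P v y \<le> \<pi> v * P v y" using pmle v Pnn by (intro mult_right_mono) auto
      also have "\<dots> = \<pi> y * P y v" using Rv v y unfolding reversible_def by auto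
      finally show "P v y \<le> \<pi> y * P y v / ?m" using pm by (simp add: field_simps)
    qed simp
    finally show "\<bar>Eerr N P \<sigma> \<delta> \<chi>0 t v y\<bar> \<le> ?D * (\<pi> y * P y v / ?m)" .
  qed
  also have "\<dots> = ?D * \<pi> y / ?m * (\<Sum>v<N. P y v)"
    by (subst sum_distrib_left) (intro sum.cong refl, simp)
  also have "\<dots> = ?D * \<pi> y / ?m" using S y unfolding stochastic_def by simp
  finally show ?thesis .
qed

lemma main_bound:
  assumes R: "rotor_seq_ok N P \<delta> \<sigma>" and S: "stochastic N P" and St: "stationary N P \<pi>"
    and Rv: "reversible N P \<pi>"
    and pm: "0 < pi_min N \<pi>" and pmle: "\<forall>v<N. pi_min N \<pi> \<le> \<pi> v" and w: "w < N"
  shows "\<bar>real (rr_chi N \<sigma> \<delta> \<chi>0 T w) - mu N P \<chi>0 T w\<bar>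
     \<le> 2 * real (Delta_bar N \<delta>) * \<pi> w / pi_min N \<pi> * (\<Sum>s<T. dtv N (mpow N P s w) \<pi>)"
proof -
  let ?D = "real (Delta_bar N \<delta>)" and ?m = "pi_min N \<pi>"
  let ?G = "Gerr N P \<sigma> \<delta> \<chi>0"
  let ?x = "\<lambda>t y. mpow N P (T - Suc t) y w - \<pi> w"
  have "real (rr_chi N \<sigma> \<delta> \<chi>0 T w) - mu N P \<chi>0 T w
      = (\<Sum>t<T. \<Sum>y<N. ?G t y * mpow N P (T - Suc t) y w)"
    using chi_expand[OF w, where P=P] by simp
  also have "\<dots> = (\<Sum>t<T. \<Sum>y<N. ?G t y * ?x t y)"
  proof (rule sum.cong[OF refl])
    fix t
    have "(\<Sum>y<N. ?G t y * ?x t y) = (\<Sum>y<N. ?G t y * mpow N P (T - Suc t) y w) - (\<Sum>y<N. ?G t y) * \<pi> w"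
      by (simp add: right_diff_distrib sum_subtractf sum_distrib_right)
    then show "(\<Sum>y<N. ?G t y * mpow N P (T - Suc t) y w) = (\<Sum>y<N. ?G t y * ?x t y)"
      using Gerr_sum0[OF R S] by simp
  qed
  finally have eq: "real (rr_chi N \<sigma> \<delta> \<chi>0 T w) - mu N P \<chi>0 T w = (\<Sum>t<T. \<Sum>y<N. ?G t y * ?x t y)" .
  have "\<bar>\<Sum>t<T. \<Sum>y<N. ?G t y * ?x t y\<bar> \<le> (\<Sum>t<T. \<Sum>y<N. \<bar>?G t y * ?x t y\<bar>)"
    by (rule order_trans[OF sum_abs]) (intro sum_mono sum_abs)
  also have "\<dots> \<le> (\<Sum>t<T. \<Sum>y<N. ?D / ?m * \<bar>\<pi> y * ?x t y\<bar>)"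
  proof (intro sum_mono)
    fix t y assume y: "y \<in> {..<N}"
    have py: "0 \<le> \<pi> y" using pm pmle y by force
    have "\<bar>?G t y * ?x t y\<bar> = \<bar>?G t y\<bar> * \<bar>?x t y\<bar>" by (rule abs_mult)
    also have "\<dots> \<le> ?D * \<pi> y / ?m * \<bar>?x t y\<bar>"
      using Gerr_bound[OF R S Rv pm pmle, of y \<chi>0 t] y by (intro mult_right_mono) auto
    also have "\<dots> = ?D / ?m * \<bar>\<pi> y * ?x t y\<bar>" using py by (simp add: abs_mult)
    finally show "\<bar>?G t y * ?x t y\<bar> \<le> ?D / ?m * \<bar>\<pi> y * ?x t y\<bar>" .
  qed
  also have "\<dots> = (\<Sum>t<T. ?D / ?m * (\<pi> w * (2 * dtv N (mpow N P (T - Suc t) w) \<pi>)))"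
  proof (intro sum.cong refl)
    fix t
    have pw: "0 \<le> \<pi> w" using pm pmle w by force
    have "(\<Sum>y<N. \<bar>\<pi> y * ?x t y\<bar>) = (\<Sum>y<N. \<pi> w * \<bar>mpow N P (T - Suc t) w y - \<pi> y\<bar>)"
    proof (intro sum.cong refl)
      fix y assume y: "y \<in> {..<N}"
      have "\<pi> y * ?x t y = \<pi> w * (mpow N P (T - Suc t) w y - \<pi> y)"
        using rev_pow[OF Rv, of y w "T - Suc t"] y w by (simp add: algebra_simps)
      then show "\<bar>\<pi> y * ?x t y\<bar> = \<pi> w * \<bar>mpow N P (T - Suc t) w y - \<pi> y\<bar>"
        using pw by (simp add: abs_mult)
    qed
    also have "\<dots> = \<pi> w * (2 * dtv N (mpow N P (T - Suc t) w) \<pi>)"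
      unfolding dtv_def by (simp add: sum_distrib_left)
    finally show "(\<Sum>y<N. ?D / ?m * \<bar>\<pi> y * ?x t y\<bar>) = ?D / ?m * (\<pi> w * (2 * dtv N (mpow N P (T - Suc t) w) \<pi>))"
      unfolding sum_distrib_left[symmetric] by (rule arg_cong[where f="\<lambda>z. ?D / ?m * z"])
  qed
  also have "\<dots> = (\<Sum>s<T. ?D / ?m * (\<pi> w * (2 * dtv N (mpow N P s w) \<pi>)))"
    by (rule sum.nat_diff_reindex)
  also have "\<dots> = 2 * ?D * \<pi> w / ?m * (\<Sum>s<T. dtv N (mpow N P s w) \<pi>)"
    by (subst sum_distrib_left) (rule sum.cong[OF refl], simp)
  finally show ?thesis using eq by simp
qed

lemma l1_contract:
  fixes x :: "nat \<Rightarrow> real" and M :: "nat \<Rightarrow> nat \<Rightarrow> real"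
  assumes rs: "\<forall>u<N. (\<Sum>v<N. M u v) = 1" and lb: "\<forall>u<N. \<forall>v<N. \<theta> \<le> M u v"
    and z: "\<theta> = 0 \<or> (\<Sum>u<N. x u) = 0"
  shows "(\<Sum>v<N. \<bar>\<Sum>u<N. x u * M u v\<bar>) \<le> (1 - real N * \<theta>) * (\<Sum>u<N. \<bar>x u\<bar>)"
proof -
  have "(\<Sum>v<N. \<bar>\<Sum>u<N. x u * M u v\<bar>) \<le> (\<Sum>v<N. \<Sum>u<N. \<bar>x u\<bar> * (M u v - \<theta>))"
  proof (rule sum_mono)
    fix v assume v: "v \<in> {..<N}"
    have "(\<Sum>u<N. x u * M u v) = (\<Sum>u<N. x u * (M u v - \<theta>)) + \<theta> * (\<Sum>u<N. x u)"
      by (simp add: right_diff_distrib sum_subtractf sum_distrib_left mult.commute)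
    also have "\<dots> = (\<Sum>u<N. x u * (M u v - \<theta>))" using z by auto
    finally have "\<bar>\<Sum>u<N. x u * M u v\<bar> \<le> (\<Sum>u<N. \<bar>x u * (M u v - \<theta>)\<bar>)"
      by (simp add: sum_abs)
    also have "\<dots> = (\<Sum>u<N. \<bar>x u\<bar> * (M u v - \<theta>))"
      using lb v by (intro sum.cong refl) (simp add: abs_mult)
    finally show "\<bar>\<Sum>u<N. x u * M u v\<bar> \<le> (\<Sum>u<N. \<bar>x u\<bar> * (M u v - \<theta>))" .
  qed
  also have "\<dots> = (\<Sum>u<N. \<bar>x u\<bar> * (\<Sum>v<N. M u v - \<theta>))"
    by (subst sum.swap) (simp add: sum_distrib_left)
  also have "\<dots> = (\<Sum>u<N. \<bar>x u\<bar> * (1 - real N * \<theta>))"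
    using rs by (intro sum.cong refl) (simp add: sum_subtractf)
  also have "\<dots> = (\<Sum>u<N. \<bar>x u\<bar>) * (1 - real N * \<theta>)"
    by (rule sum_distrib_right[symmetric])
  finally show ?thesis by (simp only: mult.commute)
qed

lemma mpow_shift_stat:
  assumes "stationary N P \<pi>" "v < N"
  shows "mpow N P (s + t) w v - \<pi> v = (\<Sum>u<N. (mpow N P s w u - \<pi> u) * mpow N P t u v)"
  using mpow_add[OF assms(2), of P s t w] stat_pow[OF assms, of t]
  by (simp add: left_diff_distrib sum_subtractf)

lemma dtv_Suc_le:
  assumes S: "stochastic N P" and St: "stationary N P \<pi>"
  shows "dtv N (mpow N P (Suc s) w) \<pi> \<le> dtv N (mpow N P s w) \<pi>"
proof -
  have "(\<Sum>v<N. \<bar>mpow N P (Suc s) w v - \<pi> v\<bar>) = (\<Sum>v<N. \<bar>\<Sum>u<N. (mpow N P s w u - \<pi> u) * P u v\<bar>)"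
  proof (rule sum.cong[OF refl])
    fix v assume "v \<in> {..<N}"
    then have "\<pi> v = (\<Sum>u<N. \<pi> u * P u v)" using St unfolding stationary_def by auto
    then show "\<bar>mpow N P (Suc s) w v - \<pi> v\<bar> = \<bar>\<Sum>u<N. (mpow N P s w u - \<pi> u) * P u v\<bar>"
      by (simp add: left_diff_distrib sum_subtractf)
  qed
  also have "\<dots> \<le> (1 - real N * 0) * (\<Sum>u<N. \<bar>mpow N P s w u - \<pi> u\<bar>)"
    using S unfolding stochastic_def by (intro l1_contract) auto
  finally show ?thesis unfolding dtv_def by simp
qed

lemma dtv_mono:
  assumes S: "stochastic N P" and St: "stationary N P \<pi>" and "s \<le> s'"
  shows "dtv N (mpow N P s' w) \<pi> \<le> dtv N (mpow N P s w) \<pi>"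
  using lift_Suc_antimono_le[of "\<lambda>s. dtv N (mpow N P s w) \<pi>", OF dtv_Suc_le[OF S St] assms(3)] .

lemma dtv_nonneg: "0 \<le> dtv N x y"
  unfolding dtv_def by (simp add: sum_nonneg)

lemma dtv_le1:
  assumes S: "stochastic N P" and St: "stationary N P \<pi>" and w: "w < N"
  shows "dtv N (mpow N P s w) \<pi> \<le> 1"
proof -
  have "(\<Sum>v<N. \<bar>mpow N P s w v - \<pi> v\<bar>) \<le> (\<Sum>v<N. mpow N P s w v + \<pi> v)"
  proof (rule sum_mono)
    fix v assume "v \<in> {..<N}"
    then have "0 \<le> mpow N P s w v" "0 \<le> \<pi> v" using mpow_nonneg[OF S] St unfolding stationary_def by auto
    then show "\<bar>mpow N P s w v - \<pi> v\<bar> \<le> mpow N P s w v + \<pi> v" by simp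
  qed
  also have "\<dots> = 2" using mpow_rowsum[OF S w] St unfolding stationary_def by (simp add: sum.distrib)
  finally show ?thesis unfolding dtv_def by simp
qed

lemma pairwise_contract:
  fixes x :: "nat \<Rightarrow> real" and r :: "nat \<Rightarrow> nat \<Rightarrow> real"
  assumes x0: "(\<Sum>a<N. x a) = 0" and D: "\<forall>a<N. \<forall>b<N. (\<Sum>v<N. \<bar>r a v - r b v\<bar>) \<le> D"
  shows "2 * (\<Sum>v<N. \<bar>\<Sum>a<N. x a * r a v\<bar>) \<le> D * (\<Sum>a<N. \<bar>x a\<bar>)"
proof -
  define p where "p a = max (x a) 0" for a
  define q where "q a = max (- x a) 0" for a
  define m where "m = (\<Sum>a<N. p a)"
  have xpq: "x a = p a - q a" for a unfolding p_def q_def by auto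
  have apq: "\<bar>x a\<bar> = p a + q a" for a unfolding p_def q_def by auto
  have pn: "0 \<le> p a" and qn: "0 \<le> q a" for a unfolding p_def q_def by auto
  have qm: "(\<Sum>a<N. q a) = m" using x0 unfolding m_def xpq by (simp add: sum_subtractf)
  have ax: "(\<Sum>a<N. \<bar>x a\<bar>) = 2 * m" unfolding apq m_def using qm m_def by (simp add: sum.distrib)
  let ?L = "(\<Sum>v<N. \<bar>\<Sum>a<N. x a * r a v\<bar>)"
  have key: "m * (\<Sum>a<N. x a * r a v) = (\<Sum>a<N. \<Sum>b<N. p a * q b * (r a v - r b v))" for v
  proof -
    have "(\<Sum>a<N. \<Sum>b<N. p a * q b * (r a v - r b v))
       = (\<Sum>a<N. p a * r a v) * (\<Sum>b<N. q b) - (\<Sum>b<N. q b * r b v) * (\<Sum>a<N. p a)"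
      by (simp add: right_diff_distrib sum_subtractf sum_distrib_left sum_distrib_right mult_ac)
         (rule sum.swap)
    also have "\<dots> = m * (\<Sum>a<N. (p a - q a) * r a v)"
      using qm m_def by (simp add: left_diff_distrib sum_subtractf algebra_simps)
    finally show ?thesis unfolding xpq by simp
  qed
  have "m * ?L \<le> (\<Sum>v<N. \<Sum>a<N. \<Sum>b<N. p a * q b * \<bar>r a v - r b v\<bar>)"
  proof -
    have m0: "0 \<le> m" unfolding m_def using pn by (simp add: sum_nonneg)
    have "m * ?L = (\<Sum>v<N. m * \<bar>\<Sum>a<N. x a * r a v\<bar>)"
      by (rule sum_distrib_left)
    also have "\<dots> = (\<Sum>v<N. \<bar>m * (\<Sum>a<N. x a * r a v)\<bar>)"
      using m0 by (simp add: abs_mult)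
    also have "\<dots> \<le> (\<Sum>v<N. \<Sum>a<N. \<Sum>b<N. p a * q b * \<bar>r a v - r b v\<bar>)"
    proof (rule sum_mono)
      fix v
      have "\<bar>m * (\<Sum>a<N. x a * r a v)\<bar> \<le> (\<Sum>a<N. \<bar>\<Sum>b<N. p a * q b * (r a v - r b v)\<bar>)"
        unfolding key by (rule sum_abs)
      also have "\<dots> \<le> (\<Sum>a<N. \<Sum>b<N. \<bar>p a * q b * (r a v - r b v)\<bar>)"
        by (intro sum_mono sum_abs)
      also have "\<dots> = (\<Sum>a<N. \<Sum>b<N. p a * q b * \<bar>r a v - r b v\<bar>)"
        using pn qn by (simp add: abs_mult)
      finally show "\<bar>m * (\<Sum>a<N. x a * r a v)\<bar> \<le> (\<Sum>a<N. \<Sum>b<N. p a * q b * \<bar>r a v - r b v\<bar>)" .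
    qed
    finally show ?thesis .
  qed
  also have "\<dots> = (\<Sum>a<N. \<Sum>v<N. \<Sum>b<N. p a * q b * \<bar>r a v - r b v\<bar>)"
    by (rule sum.swap)
  also have "\<dots> = (\<Sum>a<N. \<Sum>b<N. \<Sum>v<N. p a * q b * \<bar>r a v - r b v\<bar>)"
    by (rule sum.cong[OF refl]) (rule sum.swap)
  also have "\<dots> = (\<Sum>a<N. \<Sum>b<N. p a * q b * (\<Sum>v<N. \<bar>r a v - r b v\<bar>))"
    by (simp add: sum_distrib_left)
  also have "\<dots> \<le> (\<Sum>a<N. \<Sum>b<N. p a * q b * D)"
    using D pn qn by (intro sum_mono mult_left_mono) auto
  also have "\<dots> = (\<Sum>a<N. \<Sum>b<N. p a * q b) * D"
    by (simp add: sum_distrib_right)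
  also have "\<dots> = (\<Sum>a<N. p a) * (\<Sum>b<N. q b) * D"
    by (simp add: sum_product)
  also have "\<dots> = m * m * D"
    using qm unfolding m_def by simp
  finally have mL: "m * ?L \<le> m * (m * D)" by (simp add: mult_ac)
  show ?thesis
  proof (cases "m = 0")
    case True
    then have "\<forall>a<N. p a = 0" "\<forall>a<N. q a = 0"
      using qm pn qn unfolding m_def by (simp_all add: sum_nonneg_eq_0_iff)
    then have "\<forall>a<N. x a = 0" using xpq by simp
    then show ?thesis by simp
  next
    case False
    then have "0 < m" unfolding m_def using pn by (simp add: sum_nonneg order_le_neq_trans)
    then have "?L \<le> m * D" using mL by simp
    then show ?thesis using ax by (simp add: algebra_simps)
  qed
qed

lemma halving:
  assumes S: "stochastic N P" and St: "stationary N P \<pi>" and w: "w < N"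
    and h: "\<forall>a<N. dtv N (mpow N P t a) \<pi> \<le> 1/4"
  shows "dtv N (mpow N P (s + t) w) \<pi> \<le> dtv N (mpow N P s w) \<pi> / 2"
proof -
  define x where "x u = mpow N P s w u - \<pi> u" for u
  have x0: "(\<Sum>u<N. x u) = 0"
    using mpow_rowsum[OF S w, of s] St unfolding x_def stationary_def by (simp add: sum_subtractf)
  have D: "\<forall>a<N. \<forall>b<N. (\<Sum>v<N. \<bar>mpow N P t a v - mpow N P t b v\<bar>) \<le> 1"
  proof (intro allI impI)
    fix a b assume ab: "a < N" "b < N"
    have "(\<Sum>v<N. \<bar>mpow N P t a v - mpow N P t b v\<bar>)
        \<le> (\<Sum>v<N. \<bar>mpow N P t a v - \<pi> v\<bar> + \<bar>mpow N P t b v - \<pi> v\<bar>)"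
      by (intro sum_mono) linarith
    also have "\<dots> = 2 * dtv N (mpow N P t a) \<pi> + 2 * dtv N (mpow N P t b) \<pi>"
      unfolding dtv_def by (simp add: sum.distrib)
    also have "\<dots> \<le> 1" using h[rule_format, OF ab(1)] h[rule_format, OF ab(2)] by linarith
    finally show "(\<Sum>v<N. \<bar>mpow N P t a v - mpow N P t b v\<bar>) \<le> 1" .
  qed
  have "(\<Sum>v<N. \<bar>mpow N P (s + t) w v - \<pi> v\<bar>) = (\<Sum>v<N. \<bar>\<Sum>u<N. x u * mpow N P t u v\<bar>)"
    unfolding x_def using mpow_shift_stat[OF St] by (intro sum.cong refl) auto
  moreover have "2 * (\<Sum>v<N. \<bar>\<Sum>u<N. x u * mpow N P t u v\<bar>) \<le> 1 * (\<Sum>u<N. \<bar>x u\<bar>)"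
    by (rule pairwise_contract[OF x0 D])
  ultimately show ?thesis unfolding dtv_def x_def by simp
qed

lemma sum_bound_abstract:
  fixes d :: "nat \<Rightarrow> real"
  assumes nn: "\<And>s. 0 \<le> d s" and le1: "\<And>s. d s \<le> 1"
    and mono: "\<And>s s'. s \<le> s' \<Longrightarrow> d s' \<le> d s"
    and half: "\<And>s. d (s + \<tau>) \<le> d s / 2" and q: "d \<tau> \<le> 1/4"
  shows "(\<Sum>s<T. d s) \<le> 3/2 * real \<tau>"
proof (cases "\<tau> = 0")
  case True
  have "d s = 0" for s using half[of s] nn[of s] True by simp
  then show ?thesis by simp
next
  case False
  have pw: "d (Suc k * \<tau>) \<le> (1/2)^(k+2)" for k
  proof (induction k)
    case 0 then show ?case using q by simp
  next
    case (Suc k)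
    have "d (Suc (Suc k) * \<tau>) = d (Suc k * \<tau> + \<tau>)" by (simp add: algebra_simps)
    also have "\<dots> \<le> d (Suc k * \<tau>) / 2" by (rule half)
    also have "\<dots> \<le> (1/2)^(k+2) / 2" using Suc by simp
    finally show ?case by simp
  qed
  have blk: "(\<Sum>s<Suc k * \<tau>. d s) \<le> real \<tau> * (3/2 - (1/2)^(Suc k))" for k
  proof (induction k)
    case 0
    have "(\<Sum>s<\<tau>. d s) \<le> (\<Sum>s<\<tau>. 1)" using le1 by (intro sum_mono) auto
    then show ?case by simp
  next
    case (Suc k)
    have sp: "(\<Sum>s<Suc (Suc k) * \<tau>. d s) = (\<Sum>s<Suc k * \<tau>. d s) + (\<Sum>s\<in>{Suc k * \<tau>..<Suc k * \<tau> + \<tau>}. d s)"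
    proof -
      have "(\<Sum>s<Suc (Suc k) * \<tau>. d s) = (\<Sum>s\<in>{0..<Suc k * \<tau> + \<tau>}. d s)"
        by (simp add: lessThan_atLeast0 algebra_simps)
      also have "\<dots> = (\<Sum>s\<in>{0..<Suc k * \<tau>}. d s) + (\<Sum>s\<in>{Suc k * \<tau>..<Suc k * \<tau> + \<tau>}. d s)"
        by (rule sum.atLeastLessThan_concat[symmetric]) auto
      finally show ?thesis by (simp add: lessThan_atLeast0)
    qed
    have "(\<Sum>s\<in>{Suc k * \<tau>..<Suc k * \<tau> + \<tau>}. d s) \<le> real (card {Suc k * \<tau>..<Suc k * \<tau> + \<tau>}) * (1/2)^(k+2)"
    proof (rule sum_bounded_above)
      fix s assume "s \<in> {Suc k * \<tau>..<Suc k * \<tau> + \<tau>}"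
      then have "d s \<le> d (Suc k * \<tau>)" using mono by simp
      then show "d s \<le> (1/2)^(k+2)" using pw[of k] by linarith
    qed
    then have "(\<Sum>s\<in>{Suc k * \<tau>..<Suc k * \<tau> + \<tau>}. d s) \<le> real \<tau> * (1/2)^(k+2)" by simp
    then have "(\<Sum>s<Suc (Suc k) * \<tau>. d s) \<le> real \<tau> * (3/2 - (1/2)^(Suc k)) + real \<tau> * (1/2)^(k+2)"
      using sp Suc by linarith
    also have "\<dots> = real \<tau> * (3/2 - (1/2)^(Suc (Suc k)))" by (simp add: algebra_simps)
    finally show ?case .
  qed
  have "(\<Sum>s<T. d s) \<le> (\<Sum>s<Suc T * \<tau>. d s)"
  proof (rule sum_mono2)
    have "T * 1 \<le> T * \<tau>" using False by (intro mult_le_mono2) simp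
    then have h: "T \<le> T * \<tau>" by simp
    have "T \<le> Suc T * \<tau>" using h by (metis mult_Suc le_add2 le_trans)
    then show "{..<T} \<subseteq> {..<Suc T * \<tau>}" by (simp only: lessThan_subset_iff)
  qed (auto simp: nn)
  also have "\<dots> \<le> real \<tau> * (3/2 - (1/2)^(Suc T))" by (rule blk)
  also have "\<dots> \<le> 3/2 * real \<tau>" by (simp add: algebra_simps)
  finally show ?thesis .
qed

lemma semigroup_large:
  fixes S :: "nat set"
  assumes pos: "\<forall>x\<in>S. 0 < x" and add: "\<forall>x\<in>S. \<forall>y\<in>S. x + y \<in> S" and g: "Gcd S = 1"
  shows "\<exists>n0. \<forall>n\<ge>n0. n \<in> S"
proof -
  have ne: "S \<noteq> {}" using g by auto
  then obtain s where s: "s \<in> S" by auto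
  have mul: "x \<in> S \<Longrightarrow> Suc k * x \<in> S" for x k
    by (induction k) (use add in auto)
  have mul0: "x \<in> S \<Longrightarrow> k * x \<in> S \<union> {0}" for x k
    using mul[of x "k - 1"] by (cases k) auto
  have add0: "x \<in> S \<union> {0} \<Longrightarrow> y \<in> S \<union> {0} \<Longrightarrow> x + y \<in> S \<union> {0}" for x y
    using add by auto
  define Dset where "Dset = {d. 0 < d \<and> (\<exists>a\<in>S. a + d \<in> S)}"
  have xD: "x \<in> S \<Longrightarrow> x \<in> Dset" for x
    unfolding Dset_def using pos add by auto
  define d0 where "d0 = (LEAST d. d \<in> Dset)"
  have d0D: "d0 \<in> Dset" unfolding d0_def using xD[OF s] by (rule LeastI)
  then obtain a where a: "a \<in> S" "a + d0 \<in> S" and d0pos: "0 < d0" unfolding Dset_def by auto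
  have dv: "d0 dvd x" if x: "x \<in> S" for x
  proof -
    have "d0 \<le> x" unfolding d0_def using xD[OF x] by (rule Least_le)
    define q where "q = x div d0"
    define r where "r = x mod d0"
    have "d0 div d0 \<le> x div d0" using \<open>d0 \<le> x\<close> by (rule div_le_mono)
    then have q1: "q \<ge> 1" unfolding q_def using d0pos by simp
    have xe: "x = q * d0 + r" unfolding q_def r_def by simp
    have y1: "q * (a + d0) \<in> S" using mul[OF a(2), of "q - 1"] q1 by simp
    have y2: "x + q * a \<in> S" using mul[OF a(1), of "q - 1"] q1 add x by simp
    have eq: "x + q * a = q * (a + d0) + r" using xe by (simp add: algebra_simps)
    have "r = 0"
    proof (rule ccontr)
      assume "r \<noteq> 0"
      then have "r \<in> Dset" unfolding Dset_def using y1 y2 eq by auto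
      then have "d0 \<le> r" unfolding d0_def by (rule Least_le)
      moreover have "r < d0" unfolding r_def using d0pos by simp
      ultimately show False by simp
    qed
    then show ?thesis unfolding r_def by auto
  qed
  have "d0 dvd Gcd S" by (rule Gcd_greatest) (use dv in auto)
  then have d01: "d0 = 1" using g by simp
  have apos: "0 < a" using pos a by auto
  have "\<forall>n\<ge>a * a. n \<in> S"
  proof (intro allI impI)
    fix n assume n: "a * a \<le> n"
    define q where "q = n div a"
    define r where "r = n mod a"
    have "(a * a) div a \<le> n div a" using n by (rule div_le_mono)
    then have "a \<le> q" unfolding q_def using apos by simp
    moreover have "r < a" unfolding r_def using apos by simp
    ultimately have rq: "r \<le> q" by simp
    have e1: "n = q * a + r" unfolding q_def r_def by simp
    have e2: "(q - r) * a + r * a = q * a" using rq by (simp add: add_mult_distrib[symmetric])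
    have "n = (q - r) * a + r * (a + 1)" using e1 e2 by simp
    moreover have "(q - r) * a + r * (a + 1) \<in> S \<union> {0}"
    proof -
      have m1: "(q - r) * a \<in> S \<union> {0}" by (rule mul0[OF a(1)])
      have m2: "r * (a + d0) \<in> S \<union> {0}" by (rule mul0[OF a(2)])
      show ?thesis using add0[OF m1 m2] d01 by simp
    qed
    moreover have "n \<noteq> 0" using n apos by (metis le_0_eq mult_is_0 neq0_conv)
    ultimately show "n \<in> S" by auto
  qed
  then show ?thesis by blast
qed

lemma finite_eventually:
  fixes Q :: "'a \<Rightarrow> nat \<Rightarrow> bool"
  assumes fin: "finite A" and ev: "\<forall>x\<in>A. \<exists>n. \<forall>m\<ge>n. Q x m"
  shows "\<exists>n. \<forall>x\<in>A. \<forall>m\<ge>n. Q x m"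
proof -
  define f where "f x = (SOME n. \<forall>m\<ge>n. Q x m)" for x
  have f: "\<forall>m\<ge>f x. Q x m" if x: "x \<in> A" for x
  proof -
    have "\<exists>n. \<forall>m\<ge>n. Q x m" using ev x by (rule bspec)
    then show ?thesis unfolding f_def by (rule someI_ex)
  qed
  show ?thesis
  proof (rule exI[of _ "Max (f ` A)"], intro ballI allI impI)
    fix x m assume x: "x \<in> A" and m: "Max (f ` A) \<le> m"
    have "f x \<le> Max (f ` A)" using fin x by simp
    then have "f x \<le> m" using m by (rule order_trans)
    then show "Q x m" using f[OF x] by blast
  qed
qed

lemma primitive:
  assumes S: "stochastic N P" and E: "ergodic N P"
  shows "\<exists>r. \<forall>u<N. \<forall>v<N. 0 < mpow N P r u v"
proof -
  have ev: "\<exists>n. \<forall>m\<ge>n. 0 < mpow N P m u v" if uv: "u < N" "v < N" for u v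
  proof -
    let ?R = "{t. t \<ge> 1 \<and> mpow N P t v v > 0}"
    have g: "Gcd ?R = 1" using E uv unfolding ergodic_def aperiodic_chain_def period_def by auto
    have cl: "\<forall>x\<in>?R. \<forall>y\<in>?R. x + y \<in> ?R"
    proof (intro ballI)
      fix x y assume "x \<in> ?R" "y \<in> ?R"
      then have px: "0 < mpow N P x v v" "0 < mpow N P y v v" "x \<ge> 1" by auto
      have "mpow N P x v v * mpow N P y v v \<le> (\<Sum>w<N. mpow N P x v w * mpow N P y w v)"
        using uv by (intro member_le_sum) (auto intro!: mult_nonneg_nonneg mpow_nonneg[OF S])
      also have "\<dots> = mpow N P (x + y) v v" using mpow_add[OF uv(2)] by simp
      finally have "0 < mpow N P (x + y) v v" using mult_pos_pos[OF px(1) px(2)] by linarith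
      then show "x + y \<in> ?R" using px by auto
    qed
    have pos: "\<forall>x\<in>?R. 0 < x" by auto
    obtain n0 where n0: "\<forall>n\<ge>n0. n \<in> ?R"
      using semigroup_large[OF pos cl g] by (rule exE)
    obtain t where t: "0 < mpow N P t u v"
      using E uv unfolding ergodic_def irreducible_chain_def by auto
    show ?thesis
    proof (intro exI[of _ "t + n0"] allI impI)
      fix m assume m: "t + n0 \<le> m"
      have "n0 \<le> m - t" using m by simp
      then have "m - t \<in> ?R" using n0 by blast
      then have p2: "0 < mpow N P (m - t) v v" by simp
      have "mpow N P t u v * mpow N P (m - t) v v \<le> (\<Sum>w<N. mpow N P t u w * mpow N P (m - t) w v)"
        using uv by (intro member_le_sum) (auto intro!: mult_nonneg_nonneg mpow_nonneg[OF S])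
      also have "\<dots> = mpow N P (t + (m - t)) u v" using mpow_add[OF uv(2)] by simp
      also have "t + (m - t) = m" using m by simp
      finally show "0 < mpow N P m u v" using mult_pos_pos[OF t p2] by linarith
    qed
  qed
  have "\<exists>n. \<forall>x\<in>{..<N} \<times> {..<N}. \<forall>m\<ge>n. 0 < mpow N P m (fst x) (snd x)"
  proof (rule finite_eventually)
    show "finite ({..<N} \<times> {..<N})" by simp
    show "\<forall>x\<in>{..<N} \<times> {..<N}. \<exists>n. \<forall>m\<ge>n. 0 < mpow N P m (fst x) (snd x)"
    proof
      fix x assume "x \<in> {..<N} \<times> {..<N}"
      then have "fst x < N" "snd x < N" by auto
      then show "\<exists>n. \<forall>m\<ge>n. 0 < mpow N P m (fst x) (snd x)" by (rule ev)
    qed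
  qed
  then obtain n where n: "\<forall>x\<in>{..<N} \<times> {..<N}. \<forall>m\<ge>n. 0 < mpow N P m (fst x) (snd x)" by (rule exE)
  show ?thesis
  proof (intro exI[of _ n] allI impI)
    fix u v assume "u < N" "v < N"
    then have "(u, v) \<in> {..<N} \<times> {..<N}" by simp
    with n have "\<forall>m\<ge>n. 0 < mpow N P m (fst (u, v)) (snd (u, v))" by (rule bspec)
    then show "0 < mpow N P n u v" by simp
  qed
qed

lemma converge:
  assumes S: "stochastic N P" and St: "stationary N P \<pi>" and E: "ergodic N P" and v: "v < N"
  shows "\<exists>t. dtv N (mpow N P t v) \<pi> \<le> 1/4"
proof -
  obtain r where r: "\<forall>u<N. \<forall>v<N. 0 < mpow N P r u v" using primitive[OF S E] by auto
  let ?A = "(\<lambda>p. mpow N P r (fst p) (snd p)) ` ({..<N} \<times> {..<N})"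
  define \<theta> where "\<theta> = Min ?A"
  have fin: "finite ?A" by simp
  have ne: "?A \<noteq> {}" using v by auto
  have thpos: "0 < \<theta>" unfolding \<theta>_def using Min_in[OF fin ne] r by auto
  have thle: "\<forall>u<N. \<forall>w<N. \<theta> \<le> mpow N P r u w"
  proof (intro allI impI)
    fix u w assume "u < N" "w < N"
    then have "mpow N P r u w \<in> ?A" by (intro rev_image_eqI[of "(u, w)"]) auto
    then show "\<theta> \<le> mpow N P r u w" unfolding \<theta>_def using fin by (rule Min_le[rotated])
  qed
  define c where "c = 1 - real N * \<theta>"
  have c0: "0 \<le> c"
  proof -
    have "(\<Sum>w<N. \<theta>) \<le> (\<Sum>w<N. mpow N P r v w)" using thle v by (intro sum_mono) auto
    then show ?thesis using mpow_rowsum[OF S v, of r] unfolding c_def by simp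
  qed
  have c1: "c < 1" unfolding c_def using thpos v by simp
  have step: "dtv N (mpow N P (k * r + r) v) \<pi> \<le> c * dtv N (mpow N P (k * r) v) \<pi>" for k
  proof -
    define x where "x u = mpow N P (k * r) v u - \<pi> u" for u
    have x0: "(\<Sum>u<N. x u) = 0"
      using mpow_rowsum[OF S v, of "k * r"] St unfolding x_def stationary_def by (simp add: sum_subtractf)
    have "(\<Sum>w<N. \<bar>mpow N P (k * r + r) v w - \<pi> w\<bar>) = (\<Sum>w<N. \<bar>\<Sum>u<N. x u * mpow N P r u w\<bar>)"
      unfolding x_def using mpow_shift_stat[OF St] by (intro sum.cong refl) auto
    also have "\<dots> \<le> (1 - real N * \<theta>) * (\<Sum>u<N. \<bar>x u\<bar>)"
      by (rule l1_contract) (use mpow_rowsum[OF S] thle x0 in auto)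
    finally show ?thesis unfolding dtv_def x_def c_def by simp
  qed
  have pw: "dtv N (mpow N P (k * r) v) \<pi> \<le> c ^ k" for k
  proof (induction k)
    case 0 then show ?case using dtv_le1[OF S St v, of 0] by simp
  next
    case (Suc k)
    have "dtv N (mpow N P (Suc k * r) v) \<pi> \<le> c * dtv N (mpow N P (k * r) v) \<pi>"
      using step[of k] by (simp add: add.commute)
    also have "\<dots> \<le> c * c ^ k" using Suc c0 by (intro mult_left_mono) auto
    finally show ?case by simp
  qed
  obtain k where "c ^ k < 1/4" using real_arch_pow_inv[of "1/4" c] c1 by auto
  then show ?thesis using pw[of k] by (intro exI[of _ "k * r"]) simp
qed

theorem theorem5p10:
  fixes N :: nat and P :: "nat \<Rightarrow> nat \<Rightarrow> real" and \<pi> :: "nat \<Rightarrow> real"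
    and \<delta> :: "nat \<Rightarrow> nat" and \<sigma> :: "nat \<Rightarrow> nat \<Rightarrow> nat" and \<chi>0 :: "nat \<Rightarrow> nat"
  assumes "\<forall>u<N. \<forall>v<N. P u v \<in> \<rat>"
    and "stochastic N P"
    and "ergodic N P"
    and "stationary N P \<pi>"
    and "reversible N P \<pi>"
    and "rotor_seq_ok N P \<delta> \<sigma>"
    and "w < N"
  shows "\<bar>real (rr_chi N \<sigma> \<delta> \<chi>0 T w) - mu N P \<chi>0 T w\<bar>
           \<le> 3 * \<pi> w / pi_min N \<pi> * real (mixing_rate N P \<pi>) * real (Delta_bar N \<delta>)"
proof -
  note S = assms(2) and E = assms(3) and St = assms(4) and Rv = assms(5) and R = assms(6) and w = assms(7)
  have pipos: "0 < \<pi> v" if v: "v < N" for v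
  proof -
    have nn: "\<forall>u<N. 0 \<le> \<pi> u" and s1: "(\<Sum>u<N. \<pi> u) = 1" using St unfolding stationary_def by auto
    have "\<exists>u<N. 0 < \<pi> u"
    proof (rule ccontr)
      assume "\<not> (\<exists>u<N. 0 < \<pi> u)"
      then have "\<forall>u<N. \<pi> u = 0" using nn by force
      then show False using s1 by simp
    qed
    then obtain u where u: "u < N" "0 < \<pi> u" by auto
    obtain t where t: "0 < mpow N P t u v" using E u v unfolding ergodic_def irreducible_chain_def by auto
    have "\<pi> u * mpow N P t u v \<le> (\<Sum>x<N. \<pi> x * mpow N P t x v)"
      using u nn v by (intro member_le_sum) (auto intro!: mult_nonneg_nonneg mpow_nonneg[OF S])
    also have "\<dots> = \<pi> v" by (rule stat_pow[OF St v])
    finally show ?thesis using mult_pos_pos[OF u(2) t] by linarith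
  qed
  have fin: "finite (\<pi> ` {..<N})" and ne: "\<pi> ` {..<N} \<noteq> {}" using w by auto
  have pm: "0 < pi_min N \<pi>" unfolding pi_min_def using Min_in[OF fin ne] pipos by auto
  have pmle: "\<forall>v<N. pi_min N \<pi> \<le> \<pi> v" unfolding pi_min_def by (auto intro!: Min_le)
  define ts where "ts = mixing_rate N P \<pi>"
  have hq: "\<forall>a<N. dtv N (mpow N P ts a) \<pi> \<le> 1/4"
  proof (intro allI impI)
    fix a assume a: "a < N"
    let ?L = "LEAST t. dtv N (mpow N P t a) \<pi> \<le> 1/4"
    have "?L \<le> ts" unfolding ts_def mixing_rate_def mixing_time_def using a by (intro Max_ge) auto
    moreover have "dtv N (mpow N P ?L a) \<pi> \<le> 1/4" by (rule LeastI_ex[OF converge[OF S St E a]])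
    ultimately show "dtv N (mpow N P ts a) \<pi> \<le> 1/4" using dtv_mono[OF S St] by (meson order_trans)
  qed
  have sb: "(\<Sum>s<T. dtv N (mpow N P s w) \<pi>) \<le> 3/2 * real ts"
  proof (rule sum_bound_abstract)
    show "\<And>s. 0 \<le> dtv N (mpow N P s w) \<pi>" by (rule dtv_nonneg)
    show "\<And>s. dtv N (mpow N P s w) \<pi> \<le> 1" by (rule dtv_le1[OF S St w])
    show "\<And>s s'. s \<le> s' \<Longrightarrow> dtv N (mpow N P s' w) \<pi> \<le> dtv N (mpow N P s w) \<pi>"
      by (rule dtv_mono[OF S St])
    show "\<And>s. dtv N (mpow N P (s + ts) w) \<pi> \<le> dtv N (mpow N P s w) \<pi> / 2"
      by (rule halving[OF S St w hq])
    show "dtv N (mpow N P ts w) \<pi> \<le> 1/4" using hq w by auto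
  qed
  have coef: "0 \<le> 2 * real (Delta_bar N \<delta>) * \<pi> w / pi_min N \<pi>"
    using pipos[OF w] pm by simp
  have "\<bar>real (rr_chi N \<sigma> \<delta> \<chi>0 T w) - mu N P \<chi>0 T w\<bar>
     \<le> 2 * real (Delta_bar N \<delta>) * \<pi> w / pi_min N \<pi> * (\<Sum>s<T. dtv N (mpow N P s w) \<pi>)"
    by (rule main_bound[OF R S St Rv pm pmle w])
  also have "\<dots> \<le> 2 * real (Delta_bar N \<delta>) * \<pi> w / pi_min N \<pi> * (3/2 * real ts)"
    by (rule mult_left_mono[OF sb coef])
  also have "\<dots> = 3 * \<pi> w / pi_min N \<pi> * real ts * real (Delta_bar N \<delta>)"
    by (simp add: field_simps)
  finally show ?thesis unfolding ts_def .
qed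

end
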